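(* Let $d\ge2$, $\delta\in[0,1/d)$, and let $N$ be a $\delta$-upper bounded matrix of dimension $d\times d$. Then $N$ is invertible and $$\|N^{-1}\|_\infty\le\frac{d-1}{1-d\delta}.$$
   Context: A $d\times d$ matrix $N$ is $\delta$-upper bounded if it is stochastic (non-negative entries, rows summing to $1$), $N_{i,i}\ge1-(d-1)\delta$ for all $i$, and $N_{i,j}\le\delta$ for all $i\ne j$. For a matrix $A$, $\|A\|_\infty=\sup_{x\ne0}\|Ax\|_\infty/\|x\|_\infty=\max_i\sum_j|A_{i,j}|$. *)

theory Defs
  imports "HOL-Analysis.Analysis"
begin

definition stochastic :: "real^'n^'n \<Rightarrow> bool" where
  "stochastic N \<longleftrightarrow> (\<forall>i j. N $ i $ j \<ge> 0) \<and> (\<forall>i. (\<Sum>j\<in>UNIV. N $ i $ j) = 1)"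

definition upper_bounded :: "real \<Rightarrow> real^'n^'n \<Rightarrow> bool" where
  "upper_bounded \<delta> N \<longleftrightarrow> stochastic N
     \<and> (\<forall>i. N $ i $ i \<ge> 1 - (real CARD('n) - 1) * \<delta>)
     \<and> (\<forall>i j. i \<noteq> j \<longrightarrow> N $ i $ j \<le> \<delta>)"

text \<open>Induced infinity norm = maximal absolute row sum.\<close>
definition inf_norm :: "real^'n^'m \<Rightarrow> real" where
  "inf_norm A = Max (range (\<lambda>i. \<Sum>j\<in>UNIV. \<bar>A $ i $ j\<bar>))"

end

theory Submission
  imports Defs
begin

lemma key_upper:
  fixes N :: "real^'n^'n" and x :: "real^'n"
  assumes d2: "CARD('n) \<ge> 2" and d0: "0 \<le> \<delta>" and dlt: "real CARD('n) * \<delta> < 1"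
    and ub: "upper_bounded \<delta> N"
    and yb: "\<forall>i. \<bar>(N *v x)$i\<bar> \<le> b"
  shows "x$j \<le> (real CARD('n) - 1) / (1 - real CARD('n) * \<delta>) * b"
proof -
  define d where "d = real CARD('n)"
  define e where "e = 1 - d * \<delta>"
  have e0: "e > 0" using dlt by (simp add: e_def d_def)
  have dge: "d \<ge> 2" using d2 by (simp add: d_def)
  have nn: "\<And>i j. N$i$j \<ge> 0" and rs: "\<And>i. (\<Sum>j\<in>UNIV. N$i$j) = 1"
    and off: "\<And>i j. i \<noteq> j \<Longrightarrow> N$i$j \<le> \<delta>"
    using ub unfolding upper_bounded_def stochastic_def by auto
  have b0: "b \<ge> 0" using yb by (meson abs_ge_zero order.trans)
  have fin: "finite (UNIV::'n set)" by simp
  obtain i where xi: "\<forall>j. x$j \<le> x$i"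
  proof -
    have "Max (range (\<lambda>j. x$j)) \<in> range (\<lambda>j. x$j)" by (rule Max_in) auto
    then obtain i where "x$i = Max (range (\<lambda>j. x$j))" by (metis rangeE)
    then have "\<forall>j. x$j \<le> x$i" by (simp add: Max_ge)
    then show ?thesis using that by blast
  qed
  obtain k where xk: "\<forall>j. x$k \<le> x$j"
  proof -
    have "Min (range (\<lambda>j. x$j)) \<in> range (\<lambda>j. x$j)" by (rule Min_in) auto
    then obtain k where "x$k = Min (range (\<lambda>j. x$j))" by (metis rangeE)
    then have "\<forall>j. x$k \<le> x$j" by (simp add: Min_le)
    then show ?thesis using that by blast
  qed
  define M where "M = x$i"
  define m where "m = x$k"
  have yv: "\<And>r. (N *v x)$r = (\<Sum>j\<in>UNIV. N$r$j * x$j)"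
    by (simp add: matrix_vector_mult_def)
  have rowi: "(N *v x)$i = M - (\<Sum>j\<in>UNIV. N$i$j * (M - x$j))"
  proof -
    have "(\<Sum>j\<in>UNIV. N$i$j * (M - x$j)) = (\<Sum>j\<in>UNIV. N$i$j * M - N$i$j * x$j)"
      by (simp add: right_diff_distrib)
    also have "\<dots> = (\<Sum>j\<in>UNIV. N$i$j) * M - (\<Sum>j\<in>UNIV. N$i$j * x$j)"
      by (simp only: sum_subtractf sum_distrib_right)
    finally show ?thesis using rs[of i] yv[of i] by simp
  qed
  have rowk: "(N *v x)$k = m + (\<Sum>j\<in>UNIV. N$k$j * (x$j - m))"
  proof -
    have "(\<Sum>j\<in>UNIV. N$k$j * (x$j - m)) = (\<Sum>j\<in>UNIV. N$k$j * x$j - N$k$j * m)"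
      by (simp add: right_diff_distrib)
    also have "\<dots> = (\<Sum>j\<in>UNIV. N$k$j * x$j) - (\<Sum>j\<in>UNIV. N$k$j) * m"
      by (simp only: sum_subtractf sum_distrib_right)
    finally show ?thesis using rs[of k] yv[of k] by simp
  qed
  have Ai: "(\<Sum>j\<in>UNIV. N$i$j * (M - x$j)) \<le> \<delta> * (\<Sum>j\<in>UNIV. (M - x$j))"
    unfolding sum_distrib_left
  proof (rule sum_mono)
    fix j :: 'n
    show "N$i$j * (M - x$j) \<le> \<delta> * (M - x$j)"
    proof (cases "j = i")
      case True then show ?thesis by (simp add: M_def)
    next
      case False
      have "M - x$j \<ge> 0" using xi by (simp add: M_def)
      then show ?thesis using off[OF False[symmetric]] by (simp add: mult_right_mono)
    qed
  qed
  have Ak: "(\<Sum>j\<in>UNIV. N$k$j * (x$j - m)) \<le> \<delta> * (\<Sum>j\<in>UNIV. (x$j - m))"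
    unfolding sum_distrib_left
  proof (rule sum_mono)
    fix j :: 'n
    show "N$k$j * (x$j - m) \<le> \<delta> * (x$j - m)"
    proof (cases "j = k")
      case True then show ?thesis by (simp add: m_def)
    next
      case False
      have "x$j - m \<ge> 0" using xk by (simp add: m_def)
      then show ?thesis using off[OF False[symmetric]] by (simp add: mult_right_mono)
    qed
  qed
  have cardm: "real (card (UNIV - {i})) = d - 1" "real (card (UNIV - {k})) = d - 1"
    using d2 by (simp_all add: d_def card_Diff_singleton of_nat_diff)
  have Si: "(\<Sum>j\<in>UNIV. (M - x$j)) \<le> (d - 1) * (M - m)"
  proof -
    have "(\<Sum>j\<in>UNIV. (M - x$j)) = (M - x$i) + (\<Sum>j\<in>UNIV-{i}. (M - x$j))"
      by (simp add: sum.remove)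
    also have "\<dots> = (\<Sum>j\<in>UNIV-{i}. (M - x$j))" by (simp add: M_def)
    also have "\<dots> \<le> real (card (UNIV - {i})) * (M - m)"
      by (rule sum_bounded_above) (use xk in \<open>simp add: m_def\<close>)
    finally show ?thesis using cardm by simp
  qed
  have Sk: "(\<Sum>j\<in>UNIV. (x$j - m)) \<le> (d - 1) * (M - m)"
  proof -
    have "(\<Sum>j\<in>UNIV. (x$j - m)) = (x$k - m) + (\<Sum>j\<in>UNIV-{k}. (x$j - m))"
      by (simp add: sum.remove)
    also have "\<dots> = (\<Sum>j\<in>UNIV-{k}. (x$j - m))" by (simp add: m_def)
    also have "\<dots> \<le> real (card (UNIV - {k})) * (M - m)"
      by (rule sum_bounded_above) (use xi in \<open>simp add: M_def\<close>)
    finally show ?thesis using cardm by simp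
  qed
  have Ssum: "(\<Sum>j\<in>UNIV. (M - x$j)) + (\<Sum>j\<in>UNIV. (x$j - m)) = d * (M - m)"
  proof -
    have "(\<Sum>j\<in>UNIV. (M - x$j)) + (\<Sum>j\<in>UNIV. (x$j - m)) = (\<Sum>j\<in>UNIV. (M - x$j) + (x$j - m))"
      by (rule sum.distrib[symmetric])
    also have "\<dots> = (\<Sum>j\<in>(UNIV::'n set). M - m)" by simp
    finally show ?thesis by (simp add: d_def)
  qed
  have yi: "(N *v x)$i \<le> b" and yk: "- (N *v x)$k \<le> b" using yb by (auto simp: abs_le_iff)
  have Mm: "m \<le> M" using xi by (simp add: M_def m_def)
  have goal: "e * M \<le> (d - 1) * b"
  proof (cases "M \<le> 0")
    case True
    have "e * M \<le> 0" using e0 True by (simp add: mult_nonneg_nonpos)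
    moreover have "0 \<le> (d - 1) * b" using b0 dge by simp
    ultimately show ?thesis by linarith
  next
    case Mpos: False
    show ?thesis
    proof (cases "m \<ge> 0")
      case True
      have "(\<Sum>j\<in>UNIV. (M - x$j)) \<le> real (card (UNIV::'n set)) * M"
        by (rule sum_bounded_above) (use True xk in \<open>simp add: m_def; meson order.trans\<close>)
      then have "(\<Sum>j\<in>UNIV. (M - x$j)) \<le> d * M" by (simp add: d_def)
      then have "\<delta> * (\<Sum>j\<in>UNIV. (M - x$j)) \<le> \<delta> * (d * M)" using d0 by (rule mult_left_mono)
      then have "e * M \<le> (N *v x)$i" using rowi Ai by (simp add: e_def algebra_simps)
      moreover have "1 * b \<le> (d - 1) * b" using b0 dge by (intro mult_right_mono) auto
      ultimately show ?thesis using yi by linarith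
    next
      case mneg: False
      show ?thesis
      proof (cases "CARD('n) \<ge> 3")
        case True
        have "\<delta> * (\<Sum>j\<in>UNIV. (M - x$j)) + \<delta> * (\<Sum>j\<in>UNIV. (x$j - m)) = \<delta> * (d * (M - m))"
          using Ssum by (simp add: distrib_left[symmetric])
        then have "e * (M - m) \<le> (N *v x)$i - (N *v x)$k"
          using rowi rowk Ai Ak by (simp add: e_def algebra_simps)
        moreover have "e * M \<le> e * (M - m)" using e0 mneg by simp
        moreover have "2 * b \<le> (d - 1) * b" using True b0 by (intro mult_right_mono) (auto simp: d_def)
        ultimately show ?thesis using yi yk by linarith
      next
        case False
        then have dd: "d = 2" using d2 by (simp add: d_def)
        have e2: "e = 1 - 2 * \<delta>" by (simp add: e_def dd)
        have h1: "\<delta> * (\<Sum>j\<in>UNIV. (M - x$j)) \<le> \<delta> * (M - m)"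
          using mult_left_mono[OF Si d0] dd by simp
        have h2: "\<delta> * (\<Sum>j\<in>UNIV. (x$j - m)) \<le> \<delta> * (M - m)"
          using mult_left_mono[OF Sk d0] dd by simp
        show ?thesis
        proof (cases "- m \<le> M")
          case True
          have "\<delta> * (M - m) \<le> \<delta> * (2 * M)" using True d0 by (intro mult_left_mono) auto
          moreover have "e * M = M - \<delta> * (2 * M)" unfolding e2 by (simp add: algebra_simps)
          ultimately have "e * M \<le> (N *v x)$i" using rowi Ai h1 by linarith
          then show ?thesis using yi dd by simp
        next
          case False
          have "\<delta> * (M - m) \<le> \<delta> * (2 * (-m))" using False d0 by (intro mult_left_mono) auto
          moreover have "e * (-m) = -m - \<delta> * (2 * (-m))" unfolding e2 by (simp add: algebra_simps)
          ultimately have "e * (-m) \<le> - (N *v x)$k" using rowk Ak h2 by linarith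
          moreover have "e * M \<le> e * (-m)" using False e0 by (intro mult_left_mono) auto
          ultimately show ?thesis using yk dd by simp
        qed
      qed
    qed
  qed
  have "M \<le> (d - 1) * b / e" using goal e0 by (simp add: field_simps)
  moreover have "x$j \<le> M" using xi by (simp add: M_def)
  ultimately show ?thesis by (simp add: d_def e_def)
qed

lemma key_abs:
  fixes N :: "real^'n^'n" and x :: "real^'n"
  assumes d2: "CARD('n) \<ge> 2" and d0: "0 \<le> \<delta>" and dlt: "real CARD('n) * \<delta> < 1"
    and ub: "upper_bounded \<delta> N"
    and yb: "\<forall>i. \<bar>(N *v x)$i\<bar> \<le> b"
  shows "\<bar>x$j\<bar> \<le> (real CARD('n) - 1) / (1 - real CARD('n) * \<delta>) * b"
proof -
  have "x$j \<le> (real CARD('n) - 1) / (1 - real CARD('n) * \<delta>) * b"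
    using key_upper[OF d2 d0 dlt ub yb] .
  moreover have neg: "\<And>i. (N *v (-x))$i = - (N *v x)$i"
    by (simp add: matrix_vector_mult_def sum_negf)
  have "\<forall>i. \<bar>(N *v (-x))$i\<bar> \<le> b" using yb neg by simp
  then have "(-x)$j \<le> (real CARD('n) - 1) / (1 - real CARD('n) * \<delta>) * b"
    using key_upper[OF d2 d0 dlt ub] by blast
  ultimately show ?thesis by (simp add: abs_le_iff)
qed

theorem corollary14:
  fixes N :: "real^'n^'n" and \<delta> :: real
  assumes "CARD('n) \<ge> 2"
    and "0 \<le> \<delta>" and "\<delta> < 1 / real CARD('n)"
    and "upper_bounded \<delta> N"
  shows "invertible N \<and>
         inf_norm (matrix_inv N) \<le> (real CARD('n) - 1) / (1 - real CARD('n) * \<delta>)"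
proof -
  define C where "C = (real CARD('n) - 1) / (1 - real CARD('n) * \<delta>)"
  have dlt: "real CARD('n) * \<delta> < 1" using assms(3)
    by (simp add: field_simps)
  note key = key_abs[OF assms(1) assms(2) dlt assms(4)]
  have inj: "inj ((*v) N)"
  proof (rule injI)
    fix u v :: "real^'n"
    assume "N *v u = N *v v"
    then have "N *v (u - v) = 0" by (simp add: matrix_vector_mult_diff_distrib)
    then have "\<forall>i. \<bar>(N *v (u - v))$i\<bar> \<le> 0" by simp
    then have "\<And>j. \<bar>(u - v)$j\<bar> \<le> 0" using key by fastforce
    then show "u = v" by (simp add: vec_eq_iff)
  qed
  have inv: "invertible N"
    using inj by (simp add: invertible_left_inverse matrix_left_invertible_injective)
  then have NN: "N ** matrix_inv N = mat 1"
    unfolding invertible_def matrix_inv_def by (rule someI_ex[where P="\<lambda>A'. N ** A' = mat 1 \<and> A' ** N = mat 1", THEN conjunct1])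
  define B where "B = matrix_inv N"
  have rowb: "(\<Sum>j\<in>UNIV. \<bar>B $ i $ j\<bar>) \<le> C" for i
  proof -
    define s :: "real^'n" where "s = (\<chi> j. if B$i$j \<ge> 0 then 1 else -1)"
    have "N *v (B *v s) = s" using NN by (simp add: B_def matrix_vector_mul_assoc)
    then have "\<forall>r. \<bar>(N *v (B *v s))$r\<bar> \<le> 1" by (simp add: s_def)
    then have "\<bar>(B *v s)$i\<bar> \<le> C * 1" using key unfolding C_def by blast
    moreover have "(B *v s)$i = (\<Sum>j\<in>UNIV. \<bar>B $ i $ j\<bar>)"
      by (simp add: matrix_vector_mult_def s_def) (rule sum.cong, auto)
    ultimately show ?thesis by simp
  qed
  have "inf_norm B \<le> C"
    unfolding inf_norm_def using rowb by (subst Max_le_iff) auto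
  then show ?thesis using inv by (simp add: B_def C_def)
qed

end
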